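(* For each $i\in\{1,\dots,13\}$ and each $n$ for which the graph $G_i$ (defined in the context) is defined, $q(G_i)<q(K_{1,1,n-2}^+)$.
   Context: $q(G)$ denotes the largest eigenvalue of the signless Laplacian matrix $Q(G)=D(G)+A(G)$ ($A(G)$ adjacency matrix, $D(G)$ diagonal degree matrix). $K_{1,1,n-2}^+$ is obtained from the complete tripartite graph $K_{1,1,n-2}$ by adding one edge inside the part of size $n-2$. $K_4$ is the complete graph on 4 vertices. Define graphs $U_1,\dots,U_{12}$, each with two distinguished vertices $z,w$: - $U_1$: a 4-cycle $abcda$, plus $z$ and $w$ each adjacent to $a,b,c,d$ (6 vertices). - $U_2$: a 4-cycle $abcda$ plus the chord $ac$, plus $z$ adjacent to $a,b,c,d$ and $w$ adjacent to $b,d$ (6 vertices). - $U_3$ (resp. $U_4$): $U_1$ (resp. $U_2$) plus one new vertex adjacent only to $z$ (7 vertices). - $U_5$ (resp. $U_6$): $U_1$ (resp. $U_2$) plus a new triangle whose three vertices are all adjacent to $z$ (9 vertices). - $U_7$: a $K_4$ on $\{p,q,r,w\}$, a triangle $\{t_1,t_2,t_3\}$, and $z$ adjacent to $p,q,r,t_1,t_2,t_3$ (8 vertices). - $U_8$: a $K_4$ on $\{A,B,C,w\}$, a vertex $D$ adjacent to $w$, and $z$ adjacent to $A,B,C,D$ (6 vertices). - $U_9$: a triangle $acd$ plus a vertex $b$ adjacent to $d$, plus $z$ adjacent to $a,b,c,d$ and $w$ adjacent to $a,b,c$ (6 vertices). - $U_{10}$ (resp. $U_{11}$): $U_9$ plus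 one (resp. two) new vertices each adjacent exactly to $d$ and $z$ (7, resp. 8 vertices). - $U_{12}=U_{12}(n,s)$, $s\ge3$: a star $K_{1,s}$ with center $c$ and leaves $\ell_1,\dots,\ell_s$, plus $z$ adjacent to $c,\ell_1,\dots,\ell_s$ and $w$ adjacent to $\ell_1,\dots,\ell_s$ ($s+3$ vertices). For $i=1,\dots,11$, with $n\ge 7$ and $n-|V(U_i)|\equiv 0\pmod 4$, $G_i$ is the $n$-vertex graph obtained from $U_i$ together with $\frac{n-|V(U_i)|}{4}$ vertex-disjoint new copies of $K_4$ by adding all edges between $z$ and the vertices of these copies. $G_{12}=G_{12}(n,s)$ is obtained in the same way from $U_{12}(n,s)$ with $\frac{n-s-3}{4}$ copies of $K_4$, where $s\ge 3$, $n\ge s+7$ and $n-s-3\equiv 0\pmod 4$. $G_{13}$ is obtained from the complete bipartite graph $K_{3,n-3}$ by adding one edge inside the part of size $3$, where $n\ge 7$. *)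

theory Defs
  imports "Jordan_Normal_Form.Char_Poly"
begin

text \<open>A simple graph on the vertex set {0..<n} is given by an adjacency predicate
  E :: nat => nat => bool (assumed symmetric and irreflexive on {0..<n};
  all graphs below are built that way).\<close>

definition degree :: "nat \<Rightarrow> (nat \<Rightarrow> nat \<Rightarrow> bool) \<Rightarrow> nat \<Rightarrow> nat" where
  "degree n E i = card {j \<in> {0..<n}. E i j}"

definition signless_laplacian :: "nat \<Rightarrow> (nat \<Rightarrow> nat \<Rightarrow> bool) \<Rightarrow> real mat" where
  "signless_laplacian n E = mat n n (\<lambda>(i, j).
     (if i = j then real (degree n E i) else 0) + (if E i j then 1 else 0))"

definition q_index :: "nat \<Rightarrow> (nat \<Rightarrow> nat \<Rightarrow> bool) \<Rightarrow> real" where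
  "q_index n E = Max {\<mu>. eigenvalue (signless_laplacian n E) \<mu>}"

definition from_edges :: "(nat \<times> nat) list \<Rightarrow> nat \<Rightarrow> nat \<Rightarrow> bool" where
  "from_edges es i j = ((i, j) \<in> set es \<or> (j, i) \<in> set es)"

text \<open>Attach m vertex-disjoint copies of K4 on vertices k..k+4m-1
  (copy t is {k+4t,...,k+4t+3}) to a base graph B on {0..<k}, joining
  the distinguished vertex z = 0 to all of them.\<close>
definition attach_K4 :: "nat \<Rightarrow> nat \<Rightarrow> (nat \<Rightarrow> nat \<Rightarrow> bool) \<Rightarrow> nat \<Rightarrow> nat \<Rightarrow> bool" where
  "attach_K4 k m B i j =
     (B i j
      \<or> (i = 0 \<and> k \<le> j \<and> j < k + 4 * m)
      \<or> (j = 0 \<and> k \<le> i \<and> i < k + 4 * m)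
      \<or> (k \<le> i \<and> k \<le> j \<and> i < k + 4 * m \<and> j < k + 4 * m \<and> i \<noteq> j
          \<and> (i - k) div 4 = (j - k) div 4))"

text \<open>Vertex labels: z = 0, w = 1.\<close>
definition U1_edges :: "(nat \<times> nat) list" where   \<comment> \<open>a=2,b=3,c=4,d=5\<close>
  "U1_edges = [(2,3),(3,4),(4,5),(5,2),
               (0,2),(0,3),(0,4),(0,5),(1,2),(1,3),(1,4),(1,5)]"

definition U2_edges :: "(nat \<times> nat) list" where   \<comment> \<open>a=2,b=3,c=4,d=5\<close>
  "U2_edges = [(2,3),(3,4),(4,5),(5,2),(2,4),
               (0,2),(0,3),(0,4),(0,5),(1,3),(1,5)]"

definition U7_edges :: "(nat \<times> nat) list" where   \<comment> \<open>p=2,q=3,r=4; triangle 5,6,7\<close>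
  "U7_edges = [(2,3),(2,4),(2,1),(3,4),(3,1),(4,1),
               (5,6),(6,7),(5,7),
               (0,2),(0,3),(0,4),(0,5),(0,6),(0,7)]"

definition U8_edges :: "(nat \<times> nat) list" where   \<comment> \<open>A=2,B=3,C=4,D=5\<close>
  "U8_edges = [(2,3),(2,4),(2,1),(3,4),(3,1),(4,1),(5,1),
               (0,2),(0,3),(0,4),(0,5)]"

definition U9_edges :: "(nat \<times> nat) list" where   \<comment> \<open>a=2,b=3,c=4,d=5\<close>
  "U9_edges = [(2,4),(4,5),(2,5),(3,5),
               (0,2),(0,3),(0,4),(0,5),(1,2),(1,3),(1,4)]"

definition U_edges :: "nat \<Rightarrow> (nat \<times> nat) list" where
  "U_edges i =
    (if i = 1 then U1_edges
     else if i = 2 then U2_edges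
     else if i = 3 then U1_edges @ [(6,0)]
     else if i = 4 then U2_edges @ [(6,0)]
     else if i = 5 then U1_edges @ [(6,7),(7,8),(6,8),(0,6),(0,7),(0,8)]
     else if i = 6 then U2_edges @ [(6,7),(7,8),(6,8),(0,6),(0,7),(0,8)]
     else if i = 7 then U7_edges
     else if i = 8 then U8_edges
     else if i = 9 then U9_edges
     else if i = 10 then U9_edges @ [(6,5),(6,0)]
     else U9_edges @ [(6,5),(6,0),(7,5),(7,0)])"

definition U_size :: "nat \<Rightarrow> nat" where
  "U_size i = (if i \<in> {1,2,8,9} then 6 else if i \<in> {3,4,10} then 7
               else if i \<in> {7,11} then 8 else 9)"

definition G_graph :: "nat \<Rightarrow> nat \<Rightarrow> nat \<Rightarrow> nat \<Rightarrow> bool" where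
  "G_graph i n = attach_K4 (U_size i) ((n - U_size i) div 4) (from_edges (U_edges i))"

text \<open>U12(s): centre c = 2, leaves 3..s+2.\<close>
definition U12 :: "nat \<Rightarrow> nat \<Rightarrow> nat \<Rightarrow> bool" where
  "U12 s i j = (let leaf = (\<lambda>x. 3 \<le> x \<and> x \<le> s + 2);
                    e = (\<lambda>x y. (x = 2 \<and> leaf y) \<or> (x = 0 \<and> (y = 2 \<or> leaf y)) \<or> (x = 1 \<and> leaf y))
                in e i j \<or> e j i)"

definition G12 :: "nat \<Rightarrow> nat \<Rightarrow> nat \<Rightarrow> nat \<Rightarrow> bool" where
  "G12 n s = attach_K4 (s + 3) ((n - s - 3) div 4) (U12 s)"

definition G13 :: "nat \<Rightarrow> nat \<Rightarrow> nat \<Rightarrow> bool" where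
  "G13 n i j = ((i < 3 \<and> 3 \<le> j \<and> j < n) \<or> (j < 3 \<and> 3 \<le> i \<and> i < n)
                \<or> (i = 0 \<and> j = 1) \<or> (i = 1 \<and> j = 0))"

definition K11_plus :: "nat \<Rightarrow> nat \<Rightarrow> nat \<Rightarrow> bool" where
  "K11_plus n i j = (i < n \<and> j < n \<and> i \<noteq> j \<and>
                      (i \<le> 1 \<or> j \<le> 1 \<or> {i, j} = {2, 3}))"

end

theory Submission
  imports Defs
begin

definition rowsum :: "nat \<Rightarrow> (nat \<Rightarrow> nat \<Rightarrow> bool) \<Rightarrow> (nat \<Rightarrow> real) \<Rightarrow> nat \<Rightarrow> real" where
  "rowsum n E x i = (\<Sum>j<n. if E i j then x i + x j else 0)"

lemma SL_carrier: "signless_laplacian n E \<in> carrier_mat n n"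
  unfolding signless_laplacian_def by simp

lemma SL_mult:
  assumes "i < n" "dim_vec v = n"
  shows "(signless_laplacian n E *\<^sub>v v) $ i = rowsum n E (\<lambda>j. v $ j) i"
proof -
  have "(signless_laplacian n E *\<^sub>v v) $ i =
     (\<Sum>j\<in>{0..<n}. ((if i = j then real (degree n E i) else 0) + (if E i j then 1 else 0)) * v $ j)"
    using assms unfolding signless_laplacian_def by (simp add: scalar_prod_def)
  also have "\<dots> = (\<Sum>j\<in>{0..<n}. (if i = j then real (degree n E i) * v $ j else 0))
      + (\<Sum>j\<in>{0..<n}. (if E i j then v $ j else 0))"
    by (subst sum.distrib[symmetric], rule sum.cong) (auto simp: distrib_right)
  also have "(\<Sum>j\<in>{0..<n}. (if i = j then real (degree n E i) * v $ j else 0)) = real (degree n E i) * v $ i"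
    using assms by (simp add: sum.delta)
  also have "real (degree n E i) = (\<Sum>j\<in>{0..<n}. (if E i j then 1 else 0))"
    unfolding degree_def by (simp add: sum.If_cases, rule arg_cong[where f=card], auto)
  finally show ?thesis unfolding rowsum_def
    by (simp add: sum_distrib_right sum.distrib[symmetric] lessThan_atLeast0 if_distrib cong: if_cong)
qed

lemma eig_finite: "finite {\<mu>. eigenvalue (signless_laplacian n E) \<mu>}"
proof -
  let ?A = "signless_laplacian n E"
  have c: "coeff (char_poly ?A) n = 1" using degree_monic_char_poly[OF SL_carrier] by simp
  hence "char_poly ?A \<noteq> 0" by auto
  hence "finite {\<mu>. poly (char_poly ?A) \<mu> = 0}" by (rule poly_roots_finite)
  thus ?thesis using eigenvalue_root_char_poly[OF SL_carrier] by simp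
qed

lemma q_ge: "eigenvalue (signless_laplacian n E) \<mu> \<Longrightarrow> \<mu> \<le> q_index n E"
  unfolding q_index_def using eig_finite by (intro Max_ge) auto

lemma eig_upper:
  assumes pos: "\<And>i. i < n \<Longrightarrow> x i > 0"
    and bnd: "\<And>i. i < n \<Longrightarrow> rowsum n E x i \<le> M * x i"
    and ev: "eigenvalue (signless_laplacian n E) \<mu>"
  shows "\<mu> \<le> M"
proof -
  obtain v where v: "v \<in> carrier_vec n" "v \<noteq> 0\<^sub>v n" "signless_laplacian n E *\<^sub>v v = \<mu> \<cdot>\<^sub>v v"
    using ev unfolding eigenvalue_def eigenvector_def by (auto simp: signless_laplacian_def)
  have dv: "dim_vec v = n" using v by auto
  obtain j0 where j0: "j0 < n" "v $ j0 \<noteq> 0" using v dv by (metis eq_vecI index_zero_vec(1) index_zero_vec(2))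
  define r where "r j = \<bar>v $ j\<bar> / x j" for j
  have ne: "{0..<n} \<noteq> {}" using j0 by auto
  have "Max (r ` {0..<n}) \<in> r ` {0..<n}" using ne by (intro Max_in) auto
  then obtain k where k1: "k \<in> {0..<n}" and k2: "r k = Max (r ` {0..<n})" by auto
  have k: "k \<in> {0..<n}" "\<And>j. j \<in> {0..<n} \<Longrightarrow> r j \<le> r k"
    using k1 by (auto simp: k2)
  have kn: "k < n" using k by auto
  have rk: "r k > 0"
  proof -
    have "r j0 > 0" unfolding r_def using j0 pos by auto
    thus ?thesis using k(2)[of j0] j0 by auto
  qed
  have vj: "\<bar>v $ j\<bar> \<le> r k * x j" if "j < n" for j
    using k(2)[of j] that pos[OF that] unfolding r_def by (auto simp: field_simps)
  have vk: "\<bar>v $ k\<bar> = r k * x k" unfolding r_def using pos[OF kn] by auto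
  have "\<mu> * v $ k = rowsum n E (\<lambda>j. v $ j) k"
    using SL_mult[OF kn dv, of E] v(3) kn dv by (metis index_smult_vec(1))
  hence "\<bar>\<mu>\<bar> * \<bar>v $ k\<bar> = \<bar>rowsum n E (\<lambda>j. v $ j) k\<bar>" by (simp add: abs_mult[symmetric])
  also have "\<dots> \<le> (\<Sum>j<n. if E k j then \<bar>v $ k\<bar> + \<bar>v $ j\<bar> else 0)"
    unfolding rowsum_def by (rule order.trans[OF sum_abs]) (intro sum_mono, auto)
  also have "\<dots> \<le> (\<Sum>j<n. if E k j then r k * x k + r k * x j else 0)"
    by (intro sum_mono) (auto simp: vk intro: vj)
  also have "\<dots> = r k * rowsum n E x k"
    unfolding rowsum_def by (simp add: sum_distrib_left if_distrib distrib_left cong: if_cong)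
  also have "\<dots> \<le> r k * (M * x k)" using bnd[OF kn] rk by simp
  also have "\<dots> = M * \<bar>v $ k\<bar>" using vk by simp
  finally have "\<bar>\<mu>\<bar> * \<bar>v $ k\<bar> \<le> M * \<bar>v $ k\<bar>" .
  moreover have "\<bar>v $ k\<bar> > 0" using vk rk pos[OF kn] by simp
  ultimately have "\<bar>\<mu>\<bar> \<le> M" by (rule mult_right_le_imp_le)
  thus ?thesis by linarith
qed

lemma rowsum_cong: "(\<And>j. j < n \<Longrightarrow> f j = g j) \<Longrightarrow> i < n \<Longrightarrow> rowsum n E f i = rowsum n E g i"
  unfolding rowsum_def by (intro sum.cong) auto

lemma sum_two_out:
  fixes g :: "nat \<Rightarrow> real"
  assumes "u < n" "v < n" "u \<noteq> v"
  shows "(\<Sum>j<n. g j) = g u + g v + (\<Sum>j\<in>{..<n} - {u, v}. g j)"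
proof -
  have e: "{..<n} = insert u (insert v ({..<n} - {u, v}))" using assms by auto
  have "sum g {..<n} = sum g (insert u (insert v ({..<n} - {u, v})))" using e by (rule arg_cong)
  also have "\<dots> = g u + g v + (\<Sum>j\<in>{..<n} - {u, v}. g j)" using assms by simp
  finally show ?thesis .
qed

lemma eig_from_vec:
  assumes "dim_vec y = n" "y \<noteq> 0\<^sub>v n" "\<And>i. i < n \<Longrightarrow> rowsum n E (\<lambda>j. y $ j) i = \<mu> * y $ i"
  shows "eigenvalue (signless_laplacian n E) \<mu>"
proof -
  have dr: "dim_row (signless_laplacian n E) = n" using SL_carrier by auto
  have c1: "y \<in> carrier_vec (dim_row (signless_laplacian n E))" unfolding dr carrier_vec_def using assms(1) by simp
  have c2: "y \<noteq> 0\<^sub>v (dim_row (signless_laplacian n E))" unfolding dr by (rule assms(2))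
  have c3: "signless_laplacian n E *\<^sub>v y = \<mu> \<cdot>\<^sub>v y"
  proof (rule eq_vecI)
    fix i assume "i < dim_vec (\<mu> \<cdot>\<^sub>v y)"
    hence i: "i < n" using assms(1) by simp
    have "(signless_laplacian n E *\<^sub>v y) $ i = rowsum n E (\<lambda>j. y $ j) i" by (rule SL_mult[OF i assms(1)])
    also have "\<dots> = \<mu> * y $ i" by (rule assms(3)[OF i])
    also have "\<dots> = (\<mu> \<cdot>\<^sub>v y) $ i" using i assms(1) by simp
    finally show "(signless_laplacian n E *\<^sub>v y) $ i = (\<mu> \<cdot>\<^sub>v y) $ i" .
  next
    show "dim_vec (signless_laplacian n E *\<^sub>v y) = dim_vec (\<mu> \<cdot>\<^sub>v y)" using dr assms(1) by simp
  qed
  show ?thesis unfolding eigenvalue_def eigenvector_def using c1 c2 c3 by blast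
qed

lemma twin_eig:
  assumes un: "u < n" and vn: "v < n" and uv: "u \<noteq> v" and nu: "\<not> E u u" and nv: "\<not> E v v"
    and sym: "E u v = E v u"
    and tw: "\<And>w. w \<noteq> u \<Longrightarrow> w \<noteq> v \<Longrightarrow> E u w = E v w \<and> E w u = E w v"
  shows "\<exists>\<mu>. eigenvalue (signless_laplacian n E) \<mu>"
proof -
  define f :: "nat \<Rightarrow> real" where "f j = (if j = u then 1 else if j = v then -1 else 0)" for j
  define y where "y = vec n f"
  define \<mu> where "\<mu> = rowsum n E f u"
  have yj: "\<And>j. j < n \<Longrightarrow> y $ j = f j" unfolding y_def by simp
  have rs: "rowsum n E (\<lambda>j. y $ j) i = rowsum n E f i" if "i < n" for i
    by (rule rowsum_cong) (auto simp: yj that)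
  have split: "rowsum n E f i = (if E i u then f i + f u else 0) + (if E i v then f i + f v else 0)
      + (\<Sum>j\<in>{..<n} - {u, v}. if E i j then f i else 0)" for i
  proof -
    have "rowsum n E f i = (if E i u then f i + f u else 0) + (if E i v then f i + f v else 0)
      + (\<Sum>j\<in>{..<n} - {u, v}. if E i j then f i + f j else 0)"
      unfolding rowsum_def by (rule sum_two_out[OF un vn uv])
    also have "(\<Sum>j\<in>{..<n} - {u, v}. if E i j then f i + f j else 0) = (\<Sum>j\<in>{..<n} - {u, v}. if E i j then f i else 0)"
      by (rule sum.cong) (auto simp: f_def)
    finally show ?thesis .
  qed
  have fu: "f u = 1" and fv: "f v = -1" using uv by (auto simp: f_def)
  have ru: "rowsum n E f u = (\<Sum>j\<in>{..<n} - {u, v}. if E u j then 1 else 0)"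
    using split[of u] nu unfolding fu fv by simp
  have rv: "rowsum n E f v = - (\<Sum>j\<in>{..<n} - {u, v}. if E u j then 1 else 0)"
  proof -
    have "(\<Sum>j\<in>{..<n} - {u, v}. if E v j then f v else 0) = (\<Sum>j\<in>{..<n} - {u, v}. - (if E u j then 1 else 0))"
      by (rule sum.cong) (use tw fv in auto)
    thus ?thesis using split[of v] nv sym unfolding fu fv by (simp add: sum_negf)
  qed
  have ro: "rowsum n E f i = 0" if "i < n" "i \<noteq> u" "i \<noteq> v" for i
  proof -
    have fi: "f i = 0" using that by (simp add: f_def)
    have "E i u = E i v" using tw[OF that(2,3)] by simp
    thus ?thesis using split[of i] unfolding fi fu fv by simp
  qed
  have "eigenvalue (signless_laplacian n E) \<mu>"
  proof (rule eig_from_vec)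
    show "dim_vec y = n" unfolding y_def by simp
    show "y \<noteq> 0\<^sub>v n"
    proof
      assume "y = 0\<^sub>v n" hence "y $ u = 0" using un by simp
      thus False using yj[OF un] by (simp add: f_def)
    qed
    fix i assume i: "i < n"
    have "rowsum n E f i = \<mu> * f i"
    proof (cases "i = u")
      case True thus ?thesis unfolding \<mu>_def by (simp add: f_def)
    next
      case False
      show ?thesis
      proof (cases "i = v")
        case True thus ?thesis using ru rv uv unfolding \<mu>_def by (simp add: f_def)
      next
        case F2: False
        show ?thesis using ro[OF i False F2] False F2 by (simp add: f_def)
      qed
    qed
    thus "rowsum n E (\<lambda>j. y $ j) i = \<mu> * y $ i" using rs[OF i] yj[OF i] by simp
  qed
  thus ?thesis by blast
qed

lemma sum_first4:
  fixes g :: "nat \<Rightarrow> real"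
  assumes "4 \<le> n"
  shows "(\<Sum>j<n. g j) = g 0 + g 1 + g 2 + g 3 + (\<Sum>j\<in>{4..<n}. g j)"
proof -
  have "(\<Sum>j<n. g j) = (\<Sum>j\<in>{0..<4}. g j) + (\<Sum>j\<in>{4..<n}. g j)"
    using assms by (simp add: lessThan_atLeast0 sum.atLeastLessThan_concat)
  also have "(\<Sum>j\<in>{0..<4}. g j) = g 0 + g 1 + g 2 + g 3"
    by (simp add: numeral_eq_Suc atLeast0LessThan lessThan_Suc)
  finally show ?thesis .
qed

lemma K11_eig:
  assumes n7: "7 \<le> n"
  shows "\<exists>\<mu>. n + 17/10 \<le> \<mu> \<and> eigenvalue (signless_laplacian n (K11_plus n)) \<mu>"
proof -
  define F where "F m = m - real n - 4 / (m - 4) - 2 * (real n - 4) / (m - 2)" for m :: real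
  have rn: "(7::real) \<le> real n" using n7 by simp
  have F1: "F (real n + 17/10) \<le> 0"
  proof -
    have p1: "real n - 23/10 > 0" "real n - 3/10 > 0" using rn by auto
    have id: "17/10*(real n-23/10)*(real n-3/10) - 4*(real n-3/10) - 2*(real n-4)*(real n-23/10)
       = -(3/10)*(real n-7)^2 - (2/100)*real n - 1327/1000"
      by (simp add: power2_eq_square field_simps)
    have "17/10*(real n-23/10)*(real n-3/10) - 4*(real n-3/10) - 2*(real n-4)*(real n-23/10) \<le> 0"
      unfolding id using rn zero_le_power2[of "real n - 7"] by linarith
    moreover have "17/10*(real n-23/10)*(real n-3/10) = 17/10 * ((real n - 23/10) * (real n - 3/10))"
      by (rule mult.assoc)
    ultimately have le: "17/10 * ((real n - 23/10) * (real n - 3/10)) \<le> 4*(real n-3/10) + 2*(real n-4)*(real n-23/10)"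
      by linarith
    have ab: "(real n - 23/10) * (real n - 3/10) > 0" using p1 by simp
    have eq: "4 / (real n - 23/10) + 2 * (real n - 4) / (real n - 3/10)
        = (4*(real n-3/10) + 2*(real n-4)*(real n-23/10)) / ((real n - 23/10) * (real n - 3/10))"
      using p1 by (intro add_frac_eq) auto
    have "17/10 \<le> 4 / (real n - 23/10) + 2 * (real n - 4) / (real n - 3/10)"
      unfolding eq using le ab by (simp add: pos_le_divide_eq)
    thus ?thesis unfolding F_def by (simp add: algebra_simps)
  qed
  have F2: "0 \<le> F (real n + 3)"
  proof -
    have p1: "real n - 1 > 0" "real n + 1 > 0" using rn by auto
    have id: "3*(real n-1)*(real n+1) - 4*(real n+1) - 2*(real n-4)*(real n-1) = real n * real n + 6 * real n - 15"
      by (simp add: algebra_simps)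
    have "7 * 7 \<le> real n * real n" using rn by (intro mult_mono) auto
    hence "0 \<le> 3*(real n-1)*(real n+1) - 4*(real n+1) - 2*(real n-4)*(real n-1)"
      unfolding id using rn by linarith
    moreover have "3*(real n-1)*(real n+1) = 3*((real n-1)*(real n+1))" by (rule mult.assoc)
    ultimately have le: "4*(real n+1) + 2*(real n-4)*(real n-1) \<le> 3*((real n-1)*(real n+1))" by linarith
    have ab: "(real n - 1) * (real n + 1) > 0" using p1 by simp
    have eq: "4 / (real n - 1) + 2 * (real n - 4) / (real n + 1)
        = (4*(real n+1) + 2*(real n-4)*(real n-1)) / ((real n - 1) * (real n + 1))"
      using p1 by (intro add_frac_eq) auto
    have "4 / (real n - 1) + 2 * (real n - 4) / (real n + 1) \<le> 3"
      unfolding eq using le ab by (simp add: pos_divide_le_eq)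
    thus ?thesis unfolding F_def by (simp add: algebra_simps)
  qed
  have cont: "\<forall>m. real n + 17/10 \<le> m \<and> m \<le> real n + 3 \<longrightarrow> isCont F m"
  proof (intro allI impI)
    fix m assume "real n + 17/10 \<le> m \<and> m \<le> real n + 3"
    hence "m - 4 \<noteq> 0" "m - 2 \<noteq> 0" using rn by auto
    thus "isCont F m" unfolding F_def[abs_def] by (intro continuous_intros) auto
  qed
  obtain \<mu> where mu: "real n + 17/10 \<le> \<mu>" "\<mu> \<le> real n + 3" "F \<mu> = 0"
    using IVT[of F "real n + 17/10" 0 "real n + 3", OF F1 F2 _ cont] by auto
  have m4: "\<mu> - 4 > 0" and m2: "\<mu> - 2 > 0" using mu rn by auto
  define b where "b = 2 / (\<mu> - 4)"
  define c where "c = 2 / (\<mu> - 2)"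
  have m4': "\<mu> - 4 \<noteq> 0" and m2': "\<mu> - 2 \<noteq> 0" using m4 m2 by auto
  have bm: "b * (\<mu> - 4) = 2" unfolding b_def times_divide_eq_left using m4' by (rule nonzero_mult_div_cancel_right)
  have cm: "c * (\<mu> - 2) = 2" unfolding c_def times_divide_eq_left using m2' by (rule nonzero_mult_div_cancel_right)
  have mueq: "\<mu> = real n + 2 * b + (real n - 4) * c"
    using mu(3) unfolding F_def b_def c_def by (simp add: field_simps)
  define f :: "nat \<Rightarrow> real" where "f j = (if j < 2 then 1 else if j < 4 then b else c)" for j
  define y where "y = vec n f"
  have yj: "\<And>j. j < n \<Longrightarrow> y $ j = f j" unfolding y_def by simp
  have n4: "4 \<le> n" using n7 by simp
  have row: "rowsum n (K11_plus n) f i = \<mu> * f i" if i: "i < n" for i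
  proof -
    have tail: "(\<Sum>j\<in>{4..<n}. if K11_plus n i j then f i + f j else 0)
        = (if i \<le> 1 then (real n - 4) * (1 + c) else 0)"
    proof (cases "i \<le> 1")
      case True
      have "(\<Sum>j\<in>{4..<n}. if K11_plus n i j then f i + f j else 0) = (\<Sum>j\<in>{4..<n}. 1 + c)"
        using True i by (intro sum.cong) (auto simp: K11_plus_def f_def)
      thus ?thesis using True n4 by (simp add: of_nat_diff)
    next
      case False
      have "(\<Sum>j\<in>{4..<n}. if K11_plus n i j then f i + f j else 0) = (\<Sum>j\<in>{4..<n}. 0)"
        using False i by (intro sum.cong) (auto simp: K11_plus_def f_def doubleton_eq_iff)
      thus ?thesis using False by simp
    qed
    have "rowsum n (K11_plus n) f i =
      (if K11_plus n i 0 then f i + f 0 else 0) + (if K11_plus n i 1 then f i + f 1 else 0) +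
      (if K11_plus n i 2 then f i + f 2 else 0) + (if K11_plus n i 3 then f i + f 3 else 0) +
      (if i \<le> 1 then (real n - 4) * (1 + c) else 0)"
      unfolding rowsum_def sum_first4[OF n4] tail ..
    also have "\<dots> = \<mu> * f i"
    proof -
      consider "i = 0" | "i = 1" | "i = 2" | "i = 3" | "4 \<le> i" by linarith
      thus ?thesis
      proof cases
        case 1 thus ?thesis using n4 i by (simp add: K11_plus_def f_def mueq algebra_simps)
      next
        case 2 thus ?thesis using n4 i by (simp add: K11_plus_def f_def mueq algebra_simps)
      next
        case 3 thus ?thesis using n4 i bm by (simp add: K11_plus_def f_def algebra_simps)
      next
        case 4 thus ?thesis using n4 i bm by (simp add: K11_plus_def f_def algebra_simps insert_commute)
      next
        case 5 thus ?thesis using n4 i cm by (auto simp: K11_plus_def f_def algebra_simps doubleton_eq_iff)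
      qed
    qed
    finally show ?thesis .
  qed
  have "eigenvalue (signless_laplacian n (K11_plus n)) \<mu>"
  proof (rule eig_from_vec)
    show "dim_vec y = n" unfolding y_def by simp
    show "y \<noteq> 0\<^sub>v n"
    proof
      assume "y = 0\<^sub>v n" hence "y $ 0 = 0" using n4 by simp
      thus False using yj[of 0] n4 by (simp add: f_def)
    qed
    fix i assume i: "i < n"
    have "rowsum n (K11_plus n) (\<lambda>j. y $ j) i = rowsum n (K11_plus n) f i"
      by (rule rowsum_cong) (auto simp: yj i)
    thus "rowsum n (K11_plus n) (\<lambda>j. y $ j) i = \<mu> * y $ i" using row[OF i] yj[OF i] by simp
  qed
  thus ?thesis using mu(1) by blast
qed

lemma sum6: "sum g {..<6::nat} = g 0 + g 1 + g 2 + g 3 + g 4 + (g 5 :: real)" by (simp add: lessThan_nat_numeral ac_simps)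
lemma sum7: "sum g {..<7::nat} = g 0 + g 1 + g 2 + g 3 + g 4 + g 5 + (g 6 :: real)" by (simp add: lessThan_nat_numeral ac_simps)
lemma sum8: "sum g {..<8::nat} = g 0 + g 1 + g 2 + g 3 + g 4 + g 5 + g 6 + (g 7 :: real)" by (simp add: lessThan_nat_numeral ac_simps)
lemma sum9: "sum g {..<9::nat} = g 0 + g 1 + g 2 + g 3 + g 4 + g 5 + g 6 + g 7 + (g 8 :: real)" by (simp add: lessThan_nat_numeral ac_simps)

lemma sum_if_const:
  fixes c :: real
  assumes "finite A"
  shows "(\<Sum>j\<in>A. if P j then c else 0) = real (card {j\<in>A. P j}) * c"
proof -
  have "(\<Sum>j\<in>{j\<in>A. P j}. c) = (\<Sum>j\<in>A. if P j then c else 0)"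
    by (rule sum.inter_filter[OF assms])
  hence "(\<Sum>j\<in>A. if P j then c else 0) = (\<Sum>j\<in>{j\<in>A. P j}. c)" by simp
  thus ?thesis by simp
qed

lemma div4_iff: "(a::nat) div 4 = q \<longleftrightarrow> 4 * q \<le> a \<and> a < 4 * q + 4" by presburger

lemma attach_rows:
  fixes x :: "nat \<Rightarrow> real"
  assumes nk: "n = k + 4 * m" and k1: "1 \<le> k" and Bk: "\<And>i j. B i j \<Longrightarrow> i < k \<and> j < k"
    and x0: "x 0 = 1" and xt: "\<And>j. k \<le> j \<Longrightarrow> x j = t"
  shows "rowsum n (attach_K4 k m B) x 0 = (\<Sum>j<k. if B 0 j then 1 + x j else 0) + real (4 * m) * (1 + t)"
    and "0 < v \<Longrightarrow> v < k \<Longrightarrow> rowsum n (attach_K4 k m B) x v = (\<Sum>j<k. if B v j then x v + x j else 0)"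
    and "k \<le> v \<Longrightarrow> v < n \<Longrightarrow> rowsum n (attach_K4 k m B) x v = 1 + 7 * t"
proof -
  let ?G = "attach_K4 k m B"
  have split: "rowsum n ?G x i = (\<Sum>j<k. if ?G i j then x i + x j else 0) + (\<Sum>j\<in>{k..<n}. if ?G i j then x i + x j else 0)" for i
    unfolding rowsum_def using nk by (simp add: lessThan_atLeast0 sum.atLeastLessThan_concat)
  show "rowsum n ?G x 0 = (\<Sum>j<k. if B 0 j then 1 + x j else 0) + real (4 * m) * (1 + t)"
  proof -
    have h: "(\<Sum>j<k. if ?G 0 j then x 0 + x j else 0) = (\<Sum>j<k. if B 0 j then 1 + x j else 0)"
      using k1 by (intro sum.cong) (auto simp: attach_K4_def x0)
    have tl: "(\<Sum>j\<in>{k..<n}. if ?G 0 j then x 0 + x j else 0) = (\<Sum>j\<in>{k..<n}. 1 + t)"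
      using nk by (intro sum.cong) (auto simp: attach_K4_def x0 xt)
    show ?thesis unfolding split h tl using nk by simp
  qed
  show "rowsum n ?G x v = (\<Sum>j<k. if B v j then x v + x j else 0)" if "0 < v" "v < k"
  proof -
    have h: "(\<Sum>j<k. if ?G v j then x v + x j else 0) = (\<Sum>j<k. if B v j then x v + x j else 0)"
      using that by (intro sum.cong) (auto simp: attach_K4_def)
    have tl: "(\<Sum>j\<in>{k..<n}. if ?G v j then x v + x j else 0) = 0"
      using that by (intro sum.neutral) (auto simp: attach_K4_def dest: Bk)
    show ?thesis unfolding split h tl by simp
  qed
  show "rowsum n ?G x v = 1 + 7 * t" if v: "k \<le> v" "v < n"
  proof -
    define q where "q = (v - k) div 4"
    have q: "4 * q \<le> v - k" "v - k < 4 * q + 4" using div4_iff q_def by auto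
    have qm: "q < m" using v nk q_def by (simp add: div4_iff)
    have h: "(\<Sum>j<k. if ?G v j then x v + x j else 0) = (\<Sum>j<k. if j = 0 then 1 + t else 0)"
      using v k1 nk by (intro sum.cong) (auto simp: attach_K4_def xt x0 dest: Bk)
    have h2: "(\<Sum>j<k. if j = 0 then 1 + t else (0::real)) = 1 + t" using k1 by (simp add: sum.delta)
    have S: "{j\<in>{k..<n}. ?G v j} = {k + 4 * q..<k + 4 * q + 4} - {v}"
    proof -
      have "?G v j \<longleftrightarrow> j \<noteq> v \<and> k \<le> j \<and> j < n \<and> (j - k) div 4 = q" if "k \<le> j" "j < n" for j
        using that v k1 Bk[of v j] nk unfolding attach_K4_def q_def by auto
      thus ?thesis using q qm nk v by (auto simp: div4_iff)
    qed
    have cS: "card {j\<in>{k..<n}. ?G v j} = 3"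
    proof -
      have "v \<in> {k + 4 * q..<k + 4 * q + 4}" using q v by auto
      thus ?thesis unfolding S by simp
    qed
    have tl: "(\<Sum>j\<in>{k..<n}. if ?G v j then x v + x j else 0) = (\<Sum>j\<in>{k..<n}. if ?G v j then 2 * t else 0)"
      using v by (intro sum.cong) (auto simp: xt)
    also have "\<dots> = real (card {j\<in>{k..<n}. ?G v j}) * (2 * t)" by (rule sum_if_const) simp
    also have "\<dots> = 3 * (2 * t)" unfolding cS by simp
    finally show ?thesis unfolding split h h2 by simp
  qed
qed

lemma attach_twin:
  assumes u: "0 < u" "u < k" and v: "0 < v" "v < k" and uv: "u \<noteq> v" and nk: "n = k + 4 * m"
    and nu: "\<not> B u u" and nv: "\<not> B v v" and sym: "B u v = B v u"
    and tw: "\<And>w. w \<noteq> u \<Longrightarrow> w \<noteq> v \<Longrightarrow> B u w = B v w \<and> B w u = B w v"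
  shows "\<exists>\<mu>. eigenvalue (signless_laplacian n (attach_K4 k m B)) \<mu>"
proof (rule twin_eig)
  have e1: "attach_K4 k m B a w = B a w" if "0 < a" "a < k" for a w using that by (auto simp: attach_K4_def)
  have e2: "attach_K4 k m B w a = B w a" if "0 < a" "a < k" for a w using that by (auto simp: attach_K4_def)
  show "u < n" "v < n" "u \<noteq> v" using u v uv nk by auto
  show "\<not> attach_K4 k m B u u" "\<not> attach_K4 k m B v v" using e1 u v nu nv by auto
  show "attach_K4 k m B u v = attach_K4 k m B v u" using e1 u v sym by auto
  show "attach_K4 k m B u w = attach_K4 k m B v w \<and> attach_K4 k m B w u = attach_K4 k m B w v"
    if "w \<noteq> u" "w \<noteq> v" for w using e1 e2 u v tw[OF that] by auto
qed

lemma attach_upper: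
  fixes u :: "nat \<Rightarrow> real"
  assumes nk: "n = k + 4 * m" and k6: "6 \<le> k" and Bk: "\<And>i j. B i j \<Longrightarrow> i < k \<and> j < k"
    and u0: "u 0 = 1" and upos: "\<And>j. j < k \<Longrightarrow> u j > 0"
    and zc: "(\<Sum>j<k. if B 0 j then 1 + u j else 0) \<le> real k + 3/5"
    and vc: "\<And>v. 0 < v \<Longrightarrow> v < k \<Longrightarrow> (\<Sum>j<k. if B v j then u v + u j else 0) \<le> (real Nmin + 8/5) * u v"
    and Nmin: "Nmin \<le> n" and n7: "7 \<le> n"
    and ev: "eigenvalue (signless_laplacian n (attach_K4 k m B)) \<mu>"
  shows "\<mu> \<le> real n + 8/5"
proof (rule eig_upper[OF _ _ ev])
  define t :: real where "t = 5 / (5 * real n - 27)"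
  define x where "x j = (if j < k then u j else t)" for j
  have d: "5 * real n - 27 > 0" using n7 by simp
  have tpos: "t > 0" unfolding t_def using d by simp
  have tm: "(real n - 27/5) * t = 1" unfolding t_def using d by (simp add: field_simps)
  have x0: "x 0 = 1" using k6 u0 by (simp add: x_def)
  have xt: "\<And>j. k \<le> j \<Longrightarrow> x j = t" by (simp add: x_def)
  have k1: "1 \<le> k" using k6 by simp
  have R1: "rowsum n (attach_K4 k m B) x 0 = (\<Sum>j<k. if B 0 j then 1 + x j else 0) + real (4 * m) * (1 + t)"
    by (rule attach_rows(1)[where x=x and t=t]) (use nk k1 Bk x0 xt in auto)
  have R2: "rowsum n (attach_K4 k m B) x v = (\<Sum>j<k. if B v j then x v + x j else 0)" if "0 < v" "v < k" for v
    by (rule attach_rows(2)[where x=x and t=t]) (use nk k1 Bk x0 xt that in auto)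
  have R3: "rowsum n (attach_K4 k m B) x v = 1 + 7 * t" if "k \<le> v" "v < n" for v
    by (rule attach_rows(3)[where x=x and t=t]) (use nk k1 Bk x0 xt that in auto)
  show "\<And>i. i < n \<Longrightarrow> x i > 0" using upos tpos by (simp add: x_def)
  fix i assume i: "i < n"
  show "rowsum n (attach_K4 k m B) x i \<le> (real n + 8/5) * x i"
  proof (cases "i = 0")
    case True
    have s: "(\<Sum>j<k. if B 0 j then 1 + x j else 0) = (\<Sum>j<k. if B 0 j then 1 + u j else 0)"
      by (intro sum.cong) (auto simp: x_def)
    have "real (4 * m) * t \<le> 1"
    proof -
      have "real (4 * m) \<le> real n - 27/5" using nk k6 by simp
      hence "real (4 * m) * t \<le> (real n - 27/5) * t" using tpos by (intro mult_right_mono) auto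
      thus ?thesis using tm by simp
    qed
    moreover have "real (4 * m) = real n - real k" using nk by simp
    moreover have "rowsum n (attach_K4 k m B) x 0 = (\<Sum>j<k. if B 0 j then 1 + u j else 0) + real (4 * m) * (1 + t)"
      using R1 s by simp
    ultimately show ?thesis unfolding True x0 using zc by (simp add: algebra_simps)
  next
    case False
    show ?thesis
    proof (cases "i < k")
      case True
      have s: "(\<Sum>j<k. if B i j then x i + x j else 0) = (\<Sum>j<k. if B i j then u i + u j else 0)"
        by (intro sum.cong) (auto simp: x_def True)
      have "(real Nmin + 8/5) * u i \<le> (real n + 8/5) * u i"
        using Nmin upos[OF True] by (intro mult_right_mono) auto
      moreover have "rowsum n (attach_K4 k m B) x i = (\<Sum>j<k. if B i j then u i + u j else 0)"
        using R2[of i] False True s by simp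
      moreover have "x i = u i" using True by (simp add: x_def)
      ultimately show ?thesis using vc[of i] False True by simp
    next
      case F2: False
      have "1 + 7 * t = 7 * t + (real n - 27/5) * t" using tm by simp
      also have "\<dots> = (real n + 8/5) * t" by (simp add: algebra_simps)
      finally have e: "1 + 7 * t = (real n + 8/5) * t" .
      moreover have "rowsum n (attach_K4 k m B) x i = 1 + 7 * t" using R3[of i] F2 i by simp
      moreover have "x i = t" using F2 by (simp add: x_def)
      ultimately show ?thesis using e by simp
    qed
  qed
qed

lemma compare:
  assumes n7: "7 \<le> n" and ex: "\<exists>\<mu>. eigenvalue (signless_laplacian n E) \<mu>"
    and up: "\<And>\<mu>. eigenvalue (signless_laplacian n E) \<mu> \<Longrightarrow> \<mu> \<le> real n + 8/5"
  shows "q_index n E < q_index n (K11_plus n)"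
proof -
  have ne: "{\<mu>. eigenvalue (signless_laplacian n E) \<mu>} \<noteq> {}" using ex by auto
  have "q_index n E \<in> {\<mu>. eigenvalue (signless_laplacian n E) \<mu>}"
    unfolding q_index_def by (rule Max_in[OF eig_finite ne])
  hence "q_index n E \<le> real n + 8/5" using up by simp
  moreover obtain \<mu> where "real n + 17/10 \<le> \<mu>" "eigenvalue (signless_laplacian n (K11_plus n)) \<mu>"
    using K11_eig[OF n7] by auto
  hence "real n + 17/10 \<le> q_index n (K11_plus n)" using q_ge by (meson order.trans)
  ultimately show ?thesis by linarith
qed


lemma G1_up:
  assumes nk: "n = 6 + 4 * m" and n7: "7 \<le> n"
    and ev: "eigenvalue (signless_laplacian n (attach_K4 6 m (from_edges (U_edges 1)))) \<mu>"
  shows "\<mu> \<le> real n + 8/5"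
proof -
  define u where "u = (\<lambda>j::nat. if j = 1 then (1/5::real) else if j = 2 then (3/10::real) else if j = 3 then (3/10::real) else if j = 4 then (3/10::real) else if j = 5 then (3/10::real) else 1)"
  have Bk: "i < 6 \<and> j < 6" if "from_edges (U_edges 1) i j" for i j
    using that by (auto simp: from_edges_def U_edges_def U1_edges_def)
  have zc: "(\<Sum>j<6. if from_edges (U_edges 1) 0 j then 1 + u j else 0) \<le> real (6::nat) + 3/5"
    by (simp add: sum6 u_def from_edges_def U_edges_def U1_edges_def)
  have vc: "(\<Sum>j<6. if from_edges (U_edges 1) v j then u v + u j else 0) \<le> (real (10::nat) + 8/5) * u v"
    if "0 < v" "v < 6" for v
  proof -
    have "v = 1 \<or> v = 2 \<or> v = 3 \<or> v = 4 \<or> v = 5" using that by presburger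
    thus ?thesis by (elim disjE) (simp_all add: sum6 u_def from_edges_def U_edges_def U1_edges_def)
  qed
  have upos: "u j > 0" if "j < 6" for j using that by (simp add: u_def)
  have u0: "u 0 = 1" by (simp add: u_def)
  have N0: "(10::nat) \<le> n" using nk n7 by simp
  show ?thesis
    by (rule attach_upper[where u=u and Nmin="10::nat", OF nk _ Bk u0 upos zc vc N0 n7 ev]) simp
qed

lemma G1_ex:
  assumes nk: "n = 6 + 4 * m"
  shows "\<exists>\<mu>. eigenvalue (signless_laplacian n (attach_K4 6 m (from_edges (U_edges 1)))) \<mu>"
  by (rule attach_twin[where u=2 and v=4, OF _ _ _ _ _ nk]) (auto simp: from_edges_def U_edges_def U1_edges_def)

lemma G2_up:
  assumes nk: "n = 6 + 4 * m" and n7: "7 \<le> n"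
    and ev: "eigenvalue (signless_laplacian n (attach_K4 6 m (from_edges (U_edges 2)))) \<mu>"
  shows "\<mu> \<le> real n + 8/5"
proof -
  define u where "u = (\<lambda>j::nat. if j = 1 then (1/10::real) else if j = 2 then (3/10::real) else if j = 3 then (3/10::real) else if j = 4 then (3/10::real) else if j = 5 then (3/10::real) else 1)"
  have Bk: "i < 6 \<and> j < 6" if "from_edges (U_edges 2) i j" for i j
    using that by (auto simp: from_edges_def U_edges_def U2_edges_def)
  have zc: "(\<Sum>j<6. if from_edges (U_edges 2) 0 j then 1 + u j else 0) \<le> real (6::nat) + 3/5"
    by (simp add: sum6 u_def from_edges_def U_edges_def U2_edges_def)
  have vc: "(\<Sum>j<6. if from_edges (U_edges 2) v j then u v + u j else 0) \<le> (real (10::nat) + 8/5) * u v"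
    if "0 < v" "v < 6" for v
  proof -
    have "v = 1 \<or> v = 2 \<or> v = 3 \<or> v = 4 \<or> v = 5" using that by presburger
    thus ?thesis by (elim disjE) (simp_all add: sum6 u_def from_edges_def U_edges_def U2_edges_def)
  qed
  have upos: "u j > 0" if "j < 6" for j using that by (simp add: u_def)
  have u0: "u 0 = 1" by (simp add: u_def)
  have N0: "(10::nat) \<le> n" using nk n7 by simp
  show ?thesis
    by (rule attach_upper[where u=u and Nmin="10::nat", OF nk _ Bk u0 upos zc vc N0 n7 ev]) simp
qed

lemma G2_ex:
  assumes nk: "n = 6 + 4 * m"
  shows "\<exists>\<mu>. eigenvalue (signless_laplacian n (attach_K4 6 m (from_edges (U_edges 2)))) \<mu>"
  by (rule attach_twin[where u=2 and v=4, OF _ _ _ _ _ nk]) (auto simp: from_edges_def U_edges_def U2_edges_def)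

lemma G3_up:
  assumes nk: "n = 7 + 4 * m" and n7: "7 \<le> n"
    and ev: "eigenvalue (signless_laplacian n (attach_K4 7 m (from_edges (U_edges 3)))) \<mu>"
  shows "\<mu> \<le> real n + 8/5"
proof -
  define u where "u = (\<lambda>j::nat. if j = 1 then (11/20::real) else if j = 2 then (3/5::real) else if j = 3 then (3/5::real) else if j = 4 then (3/5::real) else if j = 5 then (3/5::real) else if j = 6 then (3/20::real) else 1)"
  have Bk: "i < 7 \<and> j < 7" if "from_edges (U_edges 3) i j" for i j
    using that by (auto simp: from_edges_def U_edges_def U1_edges_def)
  have zc: "(\<Sum>j<7. if from_edges (U_edges 3) 0 j then 1 + u j else 0) \<le> real (7::nat) + 3/5"
    by (simp add: sum7 u_def from_edges_def U_edges_def U1_edges_def)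
  have vc: "(\<Sum>j<7. if from_edges (U_edges 3) v j then u v + u j else 0) \<le> (real (7::nat) + 8/5) * u v"
    if "0 < v" "v < 7" for v
  proof -
    have "v = 1 \<or> v = 2 \<or> v = 3 \<or> v = 4 \<or> v = 5 \<or> v = 6" using that by presburger
    thus ?thesis by (elim disjE) (simp_all add: sum7 u_def from_edges_def U_edges_def U1_edges_def)
  qed
  have upos: "u j > 0" if "j < 7" for j using that by (simp add: u_def)
  have u0: "u 0 = 1" by (simp add: u_def)
  have N0: "(7::nat) \<le> n" using nk n7 by simp
  show ?thesis
    by (rule attach_upper[where u=u and Nmin="7::nat", OF nk _ Bk u0 upos zc vc N0 n7 ev]) simp
qed

lemma G3_ex:
  assumes nk: "n = 7 + 4 * m"
  shows "\<exists>\<mu>. eigenvalue (signless_laplacian n (attach_K4 7 m (from_edges (U_edges 3)))) \<mu>"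
  by (rule attach_twin[where u=2 and v=4, OF _ _ _ _ _ nk]) (auto simp: from_edges_def U_edges_def U1_edges_def)

lemma G4_up:
  assumes nk: "n = 7 + 4 * m" and n7: "7 \<le> n"
    and ev: "eigenvalue (signless_laplacian n (attach_K4 7 m (from_edges (U_edges 4)))) \<mu>"
  shows "\<mu> \<le> real n + 8/5"
proof -
  define u where "u = (\<lambda>j::nat. if j = 1 then (1/5::real) else if j = 2 then (3/5::real) else if j = 3 then (11/20::real) else if j = 4 then (3/5::real) else if j = 5 then (11/20::real) else if j = 6 then (3/20::real) else 1)"
  have Bk: "i < 7 \<and> j < 7" if "from_edges (U_edges 4) i j" for i j
    using that by (auto simp: from_edges_def U_edges_def U2_edges_def)
  have zc: "(\<Sum>j<7. if from_edges (U_edges 4) 0 j then 1 + u j else 0) \<le> real (7::nat) + 3/5"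
    by (simp add: sum7 u_def from_edges_def U_edges_def U2_edges_def)
  have vc: "(\<Sum>j<7. if from_edges (U_edges 4) v j then u v + u j else 0) \<le> (real (7::nat) + 8/5) * u v"
    if "0 < v" "v < 7" for v
  proof -
    have "v = 1 \<or> v = 2 \<or> v = 3 \<or> v = 4 \<or> v = 5 \<or> v = 6" using that by presburger
    thus ?thesis by (elim disjE) (simp_all add: sum7 u_def from_edges_def U_edges_def U2_edges_def)
  qed
  have upos: "u j > 0" if "j < 7" for j using that by (simp add: u_def)
  have u0: "u 0 = 1" by (simp add: u_def)
  have N0: "(7::nat) \<le> n" using nk n7 by simp
  show ?thesis
    by (rule attach_upper[where u=u and Nmin="7::nat", OF nk _ Bk u0 upos zc vc N0 n7 ev]) simp
qed

lemma G4_ex: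
  assumes nk: "n = 7 + 4 * m"
  shows "\<exists>\<mu>. eigenvalue (signless_laplacian n (attach_K4 7 m (from_edges (U_edges 4)))) \<mu>"
  by (rule attach_twin[where u=2 and v=4, OF _ _ _ _ _ nk]) (auto simp: from_edges_def U_edges_def U2_edges_def)

lemma G5_up:
  assumes nk: "n = 9 + 4 * m" and n7: "7 \<le> n"
    and ev: "eigenvalue (signless_laplacian n (attach_K4 9 m (from_edges (U_edges 5)))) \<mu>"
  shows "\<mu> \<le> real n + 8/5"
proof -
  define u where "u = (\<lambda>j::nat. if j = 1 then (1/5::real) else if j = 2 then (3/10::real) else if j = 3 then (3/10::real) else if j = 4 then (3/10::real) else if j = 5 then (3/10::real) else if j = 6 then (1/5::real) else if j = 7 then (1/5::real) else if j = 8 then (1/5::real) else 1)"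
  have Bk: "i < 9 \<and> j < 9" if "from_edges (U_edges 5) i j" for i j
    using that by (auto simp: from_edges_def U_edges_def U1_edges_def)
  have zc: "(\<Sum>j<9. if from_edges (U_edges 5) 0 j then 1 + u j else 0) \<le> real (9::nat) + 3/5"
    by (simp add: sum9 u_def from_edges_def U_edges_def U1_edges_def)
  have vc: "(\<Sum>j<9. if from_edges (U_edges 5) v j then u v + u j else 0) \<le> (real (9::nat) + 8/5) * u v"
    if "0 < v" "v < 9" for v
  proof -
    have "v = 1 \<or> v = 2 \<or> v = 3 \<or> v = 4 \<or> v = 5 \<or> v = 6 \<or> v = 7 \<or> v = 8" using that by presburger
    thus ?thesis by (elim disjE) (simp_all add: sum9 u_def from_edges_def U_edges_def U1_edges_def)
  qed
  have upos: "u j > 0" if "j < 9" for j using that by (simp add: u_def)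
  have u0: "u 0 = 1" by (simp add: u_def)
  have N0: "(9::nat) \<le> n" using nk n7 by simp
  show ?thesis
    by (rule attach_upper[where u=u and Nmin="9::nat", OF nk _ Bk u0 upos zc vc N0 n7 ev]) simp
qed

lemma G5_ex:
  assumes nk: "n = 9 + 4 * m"
  shows "\<exists>\<mu>. eigenvalue (signless_laplacian n (attach_K4 9 m (from_edges (U_edges 5)))) \<mu>"
  by (rule attach_twin[where u=2 and v=4, OF _ _ _ _ _ nk]) (auto simp: from_edges_def U_edges_def U1_edges_def)

lemma G6_up:
  assumes nk: "n = 9 + 4 * m" and n7: "7 \<le> n"
    and ev: "eigenvalue (signless_laplacian n (attach_K4 9 m (from_edges (U_edges 6)))) \<mu>"
  shows "\<mu> \<le> real n + 8/5"
proof -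
  define u where "u = (\<lambda>j::nat. if j = 1 then (1/10::real) else if j = 2 then (3/10::real) else if j = 3 then (3/10::real) else if j = 4 then (3/10::real) else if j = 5 then (3/10::real) else if j = 6 then (1/5::real) else if j = 7 then (1/5::real) else if j = 8 then (1/5::real) else 1)"
  have Bk: "i < 9 \<and> j < 9" if "from_edges (U_edges 6) i j" for i j
    using that by (auto simp: from_edges_def U_edges_def U2_edges_def)
  have zc: "(\<Sum>j<9. if from_edges (U_edges 6) 0 j then 1 + u j else 0) \<le> real (9::nat) + 3/5"
    by (simp add: sum9 u_def from_edges_def U_edges_def U2_edges_def)
  have vc: "(\<Sum>j<9. if from_edges (U_edges 6) v j then u v + u j else 0) \<le> (real (9::nat) + 8/5) * u v"
    if "0 < v" "v < 9" for v
  proof -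
    have "v = 1 \<or> v = 2 \<or> v = 3 \<or> v = 4 \<or> v = 5 \<or> v = 6 \<or> v = 7 \<or> v = 8" using that by presburger
    thus ?thesis by (elim disjE) (simp_all add: sum9 u_def from_edges_def U_edges_def U2_edges_def)
  qed
  have upos: "u j > 0" if "j < 9" for j using that by (simp add: u_def)
  have u0: "u 0 = 1" by (simp add: u_def)
  have N0: "(9::nat) \<le> n" using nk n7 by simp
  show ?thesis
    by (rule attach_upper[where u=u and Nmin="9::nat", OF nk _ Bk u0 upos zc vc N0 n7 ev]) simp
qed

lemma G6_ex:
  assumes nk: "n = 9 + 4 * m"
  shows "\<exists>\<mu>. eigenvalue (signless_laplacian n (attach_K4 9 m (from_edges (U_edges 6)))) \<mu>"
  by (rule attach_twin[where u=2 and v=4, OF _ _ _ _ _ nk]) (auto simp: from_edges_def U_edges_def U2_edges_def)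

lemma G7_up:
  assumes nk: "n = 8 + 4 * m" and n7: "7 \<le> n"
    and ev: "eigenvalue (signless_laplacian n (attach_K4 8 m (from_edges (U_edges 7)))) \<mu>"
  shows "\<mu> \<le> real n + 8/5"
proof -
  define u where "u = (\<lambda>j::nat. if j = 1 then (1/5::real) else if j = 2 then (2/5::real) else if j = 3 then (2/5::real) else if j = 4 then (2/5::real) else if j = 5 then (3/10::real) else if j = 6 then (3/10::real) else if j = 7 then (3/10::real) else 1)"
  have Bk: "i < 8 \<and> j < 8" if "from_edges (U_edges 7) i j" for i j
    using that by (auto simp: from_edges_def U_edges_def U7_edges_def)
  have zc: "(\<Sum>j<8. if from_edges (U_edges 7) 0 j then 1 + u j else 0) \<le> real (8::nat) + 3/5"
    by (simp add: sum8 u_def from_edges_def U_edges_def U7_edges_def)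
  have vc: "(\<Sum>j<8. if from_edges (U_edges 7) v j then u v + u j else 0) \<le> (real (8::nat) + 8/5) * u v"
    if "0 < v" "v < 8" for v
  proof -
    have "v = 1 \<or> v = 2 \<or> v = 3 \<or> v = 4 \<or> v = 5 \<or> v = 6 \<or> v = 7" using that by presburger
    thus ?thesis by (elim disjE) (simp_all add: sum8 u_def from_edges_def U_edges_def U7_edges_def)
  qed
  have upos: "u j > 0" if "j < 8" for j using that by (simp add: u_def)
  have u0: "u 0 = 1" by (simp add: u_def)
  have N0: "(8::nat) \<le> n" using nk n7 by simp
  show ?thesis
    by (rule attach_upper[where u=u and Nmin="8::nat", OF nk _ Bk u0 upos zc vc N0 n7 ev]) simp
qed

lemma G7_ex:
  assumes nk: "n = 8 + 4 * m"
  shows "\<exists>\<mu>. eigenvalue (signless_laplacian n (attach_K4 8 m (from_edges (U_edges 7)))) \<mu>"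
  by (rule attach_twin[where u=2 and v=3, OF _ _ _ _ _ nk]) (auto simp: from_edges_def U_edges_def U7_edges_def)

lemma G8_up:
  assumes nk: "n = 6 + 4 * m" and n7: "7 \<le> n"
    and ev: "eigenvalue (signless_laplacian n (attach_K4 6 m (from_edges (U_edges 8)))) \<mu>"
  shows "\<mu> \<le> real n + 8/5"
proof -
  define u where "u = (\<lambda>j::nat. if j = 1 then (1/10::real) else if j = 2 then (1/5::real) else if j = 3 then (1/5::real) else if j = 4 then (1/5::real) else if j = 5 then (3/20::real) else 1)"
  have Bk: "i < 6 \<and> j < 6" if "from_edges (U_edges 8) i j" for i j
    using that by (auto simp: from_edges_def U_edges_def U8_edges_def)
  have zc: "(\<Sum>j<6. if from_edges (U_edges 8) 0 j then 1 + u j else 0) \<le> real (6::nat) + 3/5"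
    by (simp add: sum6 u_def from_edges_def U_edges_def U8_edges_def)
  have vc: "(\<Sum>j<6. if from_edges (U_edges 8) v j then u v + u j else 0) \<le> (real (10::nat) + 8/5) * u v"
    if "0 < v" "v < 6" for v
  proof -
    have "v = 1 \<or> v = 2 \<or> v = 3 \<or> v = 4 \<or> v = 5" using that by presburger
    thus ?thesis by (elim disjE) (simp_all add: sum6 u_def from_edges_def U_edges_def U8_edges_def)
  qed
  have upos: "u j > 0" if "j < 6" for j using that by (simp add: u_def)
  have u0: "u 0 = 1" by (simp add: u_def)
  have N0: "(10::nat) \<le> n" using nk n7 by simp
  show ?thesis
    by (rule attach_upper[where u=u and Nmin="10::nat", OF nk _ Bk u0 upos zc vc N0 n7 ev]) simp
qed

lemma G8_ex:
  assumes nk: "n = 6 + 4 * m"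
  shows "\<exists>\<mu>. eigenvalue (signless_laplacian n (attach_K4 6 m (from_edges (U_edges 8)))) \<mu>"
  by (rule attach_twin[where u=2 and v=3, OF _ _ _ _ _ nk]) (auto simp: from_edges_def U_edges_def U8_edges_def)

lemma G9_up:
  assumes nk: "n = 6 + 4 * m" and n7: "7 \<le> n"
    and ev: "eigenvalue (signless_laplacian n (attach_K4 6 m (from_edges (U_edges 9)))) \<mu>"
  shows "\<mu> \<le> real n + 8/5"
proof -
  define u where "u = (\<lambda>j::nat. if j = 1 then (1/10::real) else if j = 2 then (3/10::real) else if j = 3 then (1/5::real) else if j = 4 then (3/10::real) else if j = 5 then (3/10::real) else 1)"
  have Bk: "i < 6 \<and> j < 6" if "from_edges (U_edges 9) i j" for i j
    using that by (auto simp: from_edges_def U_edges_def U9_edges_def)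
  have zc: "(\<Sum>j<6. if from_edges (U_edges 9) 0 j then 1 + u j else 0) \<le> real (6::nat) + 3/5"
    by (simp add: sum6 u_def from_edges_def U_edges_def U9_edges_def)
  have vc: "(\<Sum>j<6. if from_edges (U_edges 9) v j then u v + u j else 0) \<le> (real (10::nat) + 8/5) * u v"
    if "0 < v" "v < 6" for v
  proof -
    have "v = 1 \<or> v = 2 \<or> v = 3 \<or> v = 4 \<or> v = 5" using that by presburger
    thus ?thesis by (elim disjE) (simp_all add: sum6 u_def from_edges_def U_edges_def U9_edges_def)
  qed
  have upos: "u j > 0" if "j < 6" for j using that by (simp add: u_def)
  have u0: "u 0 = 1" by (simp add: u_def)
  have N0: "(10::nat) \<le> n" using nk n7 by simp
  show ?thesis
    by (rule attach_upper[where u=u and Nmin="10::nat", OF nk _ Bk u0 upos zc vc N0 n7 ev]) simp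
qed

lemma G9_ex:
  assumes nk: "n = 6 + 4 * m"
  shows "\<exists>\<mu>. eigenvalue (signless_laplacian n (attach_K4 6 m (from_edges (U_edges 9)))) \<mu>"
  by (rule attach_twin[where u=2 and v=4, OF _ _ _ _ _ nk]) (auto simp: from_edges_def U_edges_def U9_edges_def)

lemma G10_up:
  assumes nk: "n = 7 + 4 * m" and n7: "7 \<le> n"
    and ev: "eigenvalue (signless_laplacian n (attach_K4 7 m (from_edges (U_edges 10)))) \<mu>"
  shows "\<mu> \<le> real n + 8/5"
proof -
  define u where "u = (\<lambda>j::nat. if j = 1 then (27/100::real) else if j = 2 then (57/100::real) else if j = 3 then (37/100::real) else if j = 4 then (57/100::real) else if j = 5 then (39/50::real) else if j = 6 then (27/100::real) else 1)"
  have Bk: "i < 7 \<and> j < 7" if "from_edges (U_edges 10) i j" for i j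
    using that by (auto simp: from_edges_def U_edges_def U9_edges_def)
  have zc: "(\<Sum>j<7. if from_edges (U_edges 10) 0 j then 1 + u j else 0) \<le> real (7::nat) + 3/5"
    by (simp add: sum7 u_def from_edges_def U_edges_def U9_edges_def)
  have vc: "(\<Sum>j<7. if from_edges (U_edges 10) v j then u v + u j else 0) \<le> (real (7::nat) + 8/5) * u v"
    if "0 < v" "v < 7" for v
  proof -
    have "v = 1 \<or> v = 2 \<or> v = 3 \<or> v = 4 \<or> v = 5 \<or> v = 6" using that by presburger
    thus ?thesis by (elim disjE) (simp_all add: sum7 u_def from_edges_def U_edges_def U9_edges_def)
  qed
  have upos: "u j > 0" if "j < 7" for j using that by (simp add: u_def)
  have u0: "u 0 = 1" by (simp add: u_def)
  have N0: "(7::nat) \<le> n" using nk n7 by simp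
  show ?thesis
    by (rule attach_upper[where u=u and Nmin="7::nat", OF nk _ Bk u0 upos zc vc N0 n7 ev]) simp
qed

lemma G10_ex:
  assumes nk: "n = 7 + 4 * m"
  shows "\<exists>\<mu>. eigenvalue (signless_laplacian n (attach_K4 7 m (from_edges (U_edges 10)))) \<mu>"
  by (rule attach_twin[where u=2 and v=4, OF _ _ _ _ _ nk]) (auto simp: from_edges_def U_edges_def U9_edges_def)

lemma G11_up:
  assumes nk: "n = 8 + 4 * m" and n7: "7 \<le> n"
    and ev: "eigenvalue (signless_laplacian n (attach_K4 8 m (from_edges (U_edges 11)))) \<mu>"
  shows "\<mu> \<le> real n + 8/5"
proof -
  define u where "u = (\<lambda>j::nat. if j = 1 then (1/5::real) else if j = 2 then (9/20::real) else if j = 3 then (3/10::real) else if j = 4 then (9/20::real) else if j = 5 then (3/4::real) else if j = 6 then (1/4::real) else if j = 7 then (1/4::real) else 1)"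
  have Bk: "i < 8 \<and> j < 8" if "from_edges (U_edges 11) i j" for i j
    using that by (auto simp: from_edges_def U_edges_def U9_edges_def)
  have zc: "(\<Sum>j<8. if from_edges (U_edges 11) 0 j then 1 + u j else 0) \<le> real (8::nat) + 3/5"
    by (simp add: sum8 u_def from_edges_def U_edges_def U9_edges_def)
  have vc: "(\<Sum>j<8. if from_edges (U_edges 11) v j then u v + u j else 0) \<le> (real (8::nat) + 8/5) * u v"
    if "0 < v" "v < 8" for v
  proof -
    have "v = 1 \<or> v = 2 \<or> v = 3 \<or> v = 4 \<or> v = 5 \<or> v = 6 \<or> v = 7" using that by presburger
    thus ?thesis by (elim disjE) (simp_all add: sum8 u_def from_edges_def U_edges_def U9_edges_def)
  qed
  have upos: "u j > 0" if "j < 8" for j using that by (simp add: u_def)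
  have u0: "u 0 = 1" by (simp add: u_def)
  have N0: "(8::nat) \<le> n" using nk n7 by simp
  show ?thesis
    by (rule attach_upper[where u=u and Nmin="8::nat", OF nk _ Bk u0 upos zc vc N0 n7 ev]) simp
qed

lemma G11_ex:
  assumes nk: "n = 8 + 4 * m"
  shows "\<exists>\<mu>. eigenvalue (signless_laplacian n (attach_K4 8 m (from_edges (U_edges 11)))) \<mu>"
  by (rule attach_twin[where u=2 and v=4, OF _ _ _ _ _ nk]) (auto simp: from_edges_def U_edges_def U9_edges_def)

lemma sum_first3:
  fixes g :: "nat \<Rightarrow> real"
  assumes "3 \<le> n"
  shows "(\<Sum>j<n. g j) = g 0 + g 1 + g 2 + (\<Sum>j\<in>{3..<n}. g j)"
proof -
  have "(\<Sum>j<n. g j) = (\<Sum>j\<in>{0..<3}. g j) + (\<Sum>j\<in>{3..<n}. g j)"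
    using assms by (simp add: lessThan_atLeast0 sum.atLeastLessThan_concat)
  also have "(\<Sum>j\<in>{0..<3}. g j) = g 0 + g 1 + g 2"
    by (simp add: numeral_eq_Suc atLeast0LessThan lessThan_Suc)
  finally show ?thesis .
qed

lemma G12_up:
  assumes s3: "3 \<le> s" and nk: "n = (s + 3) + 4 * m" and ns: "s + 7 \<le> n"
    and ev: "eigenvalue (signless_laplacian n (attach_K4 (s + 3) m (U12 s))) \<mu>"
  shows "\<mu> \<le> real n + 8/5"
proof -
  define u :: "nat \<Rightarrow> real" where "u j = (if j = 0 then 1 else if j \<le> 2 then 1/2 else 2 / real s)" for j
  have sp: "real s > 0" using s3 by simp
  have Bk: "i < s + 3 \<and> j < s + 3" if "U12 s i j" for i j
    using that by (auto simp: U12_def Let_def)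
  have k3: "3 \<le> s + 3" by simp
  have tail: "(\<Sum>j\<in>{3..<s+3}. c) = real s * c" for c :: real by simp
  have zc: "(\<Sum>j<s+3. if U12 s 0 j then 1 + u j else 0) \<le> real (s + 3) + 3/5"
  proof -
    have "(\<Sum>j\<in>{3..<s+3}. if U12 s 0 j then 1 + u j else 0) = (\<Sum>j\<in>{3..<s+3}. 1 + 2 / real s)"
      by (intro sum.cong) (auto simp: U12_def Let_def u_def)
    hence "(\<Sum>j<s+3. if U12 s 0 j then 1 + u j else 0) = 3/2 + real s * (1 + 2 / real s)"
      unfolding sum_first3[OF k3] tail by (simp add: U12_def Let_def u_def)
    also have "\<dots> = real s + 7/2" using sp by (simp add: field_simps)
    finally show ?thesis by simp
  qed
  have vc: "(\<Sum>j<s+3. if U12 s v j then u v + u j else 0) \<le> (real (s + 7) + 8/5) * u v"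
    if v: "0 < v" "v < s + 3" for v
  proof -
    consider "v = 1" | "v = 2" | "3 \<le> v" using v by linarith
    thus ?thesis
    proof cases
      case 1
      have "(\<Sum>j\<in>{3..<s+3}. if U12 s v j then u v + u j else 0) = (\<Sum>j\<in>{3..<s+3}. 1/2 + 2 / real s)"
        using 1 by (intro sum.cong) (auto simp: U12_def Let_def u_def)
      hence "(\<Sum>j<s+3. if U12 s v j then u v + u j else 0) = real s * (1/2 + 2 / real s)"
        unfolding sum_first3[OF k3] tail using 1 by (simp add: U12_def Let_def u_def)
      also have "\<dots> = real s / 2 + 2" using sp by (simp add: field_simps)
      finally show ?thesis using 1 by (simp add: u_def)
    next
      case 2
      have "(\<Sum>j\<in>{3..<s+3}. if U12 s v j then u v + u j else 0) = (\<Sum>j\<in>{3..<s+3}. 1/2 + 2 / real s)"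
        using 2 by (intro sum.cong) (auto simp: U12_def Let_def u_def)
      hence "(\<Sum>j<s+3. if U12 s v j then u v + u j else 0) = 3/2 + real s * (1/2 + 2 / real s)"
        unfolding sum_first3[OF k3] tail using 2 by (simp add: U12_def Let_def u_def)
      also have "\<dots> = real s / 2 + 7/2" using sp by (simp add: field_simps)
      finally show ?thesis using 2 by (simp add: u_def)
    next
      case 3
      have "(\<Sum>j\<in>{3..<s+3}. if U12 s v j then u v + u j else 0) = (\<Sum>j\<in>{3..<s+3}. 0)"
        using 3 by (intro sum.cong) (auto simp: U12_def Let_def u_def)
      hence e: "(\<Sum>j<s+3. if U12 s v j then u v + u j else 0) = 3 * (2 / real s) + 2"
        unfolding sum_first3[OF k3] using 3 v by (simp add: U12_def Let_def u_def)
      have "3 * (2 / real s) + 2 \<le> (real (s + 7) + 8/5) * (2 / real s)"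
        using sp by (simp add: field_simps)
      thus ?thesis unfolding e using 3 by (simp add: u_def)
    qed
  qed
  have upos: "u j > 0" if "j < s + 3" for j using sp by (simp add: u_def)
  have u0: "u 0 = 1" by (simp add: u_def)
  have n7: "7 \<le> n" using ns by simp
  have k6: "6 \<le> s + 3" using s3 by simp
  show ?thesis
    by (rule attach_upper[where u=u and Nmin="s + 7", OF nk k6 Bk u0 upos zc vc ns n7 ev])
qed

lemma G12_ex:
  assumes s3: "3 \<le> s" and nk: "n = (s + 3) + 4 * m"
  shows "\<exists>\<mu>. eigenvalue (signless_laplacian n (attach_K4 (s + 3) m (U12 s))) \<mu>"
  by (rule attach_twin[where u=3 and v=4, OF _ _ _ _ _ nk]) (use s3 in \<open>auto simp: U12_def Let_def\<close>)

lemma G13_up: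
  assumes n7: "7 \<le> n" and ev: "eigenvalue (signless_laplacian n (G13 n)) \<mu>"
  shows "\<mu> \<le> real n + 8/5"
proof (rule eig_upper[OF _ _ ev])
  define c :: real where "c = 13 / (5 * (real n - 3))"
  define x where "x j = (if j \<le> 1 then 1 else if j = 2 then 3/5 else c)" for j :: nat
  have n3: "real n - 3 > 0" using n7 by simp
  have cpos: "c > 0" unfolding c_def using n3 by simp
  have cm: "(real n - 3) * c = 13/5" unfolding c_def using n3 by (simp add: field_simps)
  have k3: "3 \<le> n" using n7 by simp
  have tail: "(\<Sum>j\<in>{3..<n}. d) = (real n - 3) * d" for d :: real using k3 by (simp add: of_nat_diff)
  show "\<And>i. i < n \<Longrightarrow> x i > 0" using cpos by (simp add: x_def)
  fix i assume i: "i < n"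
  consider "i \<le> 1" | "i = 2" | "3 \<le> i" by linarith
  thus "rowsum n (G13 n) x i \<le> (real n + 8/5) * x i"
  proof cases
    case 1
    have "(\<Sum>j\<in>{3..<n}. if G13 n i j then x i + x j else 0) = (\<Sum>j\<in>{3..<n}. 1 + c)"
      using 1 by (intro sum.cong) (auto simp: G13_def x_def)
    hence "rowsum n (G13 n) x i = 2 + (real n - 3) * (1 + c)"
      unfolding rowsum_def sum_first3[OF k3] tail using 1 by (auto simp: G13_def x_def)
    also have "\<dots> = real n + 8/5" using cm by (simp add: algebra_simps)
    finally show ?thesis using 1 by (simp add: x_def)
  next
    case 2
    have "(\<Sum>j\<in>{3..<n}. if G13 n i j then x i + x j else 0) = (\<Sum>j\<in>{3..<n}. 3/5 + c)"
      using 2 by (intro sum.cong) (auto simp: G13_def x_def)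
    hence "rowsum n (G13 n) x i = (real n - 3) * (3/5 + c)"
      unfolding rowsum_def sum_first3[OF k3] tail using 2 by (simp add: G13_def x_def)
    also have "\<dots> = 3/5 * real n + 4/5" unfolding distrib_left cm by (simp add: field_simps)
    finally show ?thesis using 2 by (simp add: x_def algebra_simps)
  next
    case 3
    have "(\<Sum>j\<in>{3..<n}. if G13 n i j then x i + x j else 0) = (\<Sum>j\<in>{3..<n}. 0)"
      using 3 by (intro sum.cong) (auto simp: G13_def x_def)
    hence e: "rowsum n (G13 n) x i = 3 * c + 13/5"
      unfolding rowsum_def sum_first3[OF k3] using 3 i by (simp add: G13_def x_def)
    have "3 * c + 13/5 = 3 * c + (real n - 3) * c" using cm by simp
    also have "\<dots> \<le> (real n + 8/5) * c" using cpos by (simp add: algebra_simps)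
    finally show ?thesis unfolding e using 3 by (simp add: x_def)
  qed
qed

lemma G13_ex:
  assumes n7: "7 \<le> n"
  shows "\<exists>\<mu>. eigenvalue (signless_laplacian n (G13 n)) \<mu>"
  by (rule twin_eig[where u=3 and v=4]) (use n7 in \<open>auto simp: G13_def\<close>)


theorem lemma2p9:
  shows "(\<forall>i \<in> {1..11}. \<forall>n. 7 \<le> n \<and> U_size i \<le> n \<and> (n - U_size i) mod 4 = 0 \<longrightarrow>
            q_index n (G_graph i n) < q_index n (K11_plus n))
       \<and> (\<forall>n s. 3 \<le> s \<and> s + 7 \<le> n \<and> (n - s - 3) mod 4 = 0 \<longrightarrow>
            q_index n (G12 n s) < q_index n (K11_plus n))
       \<and> (\<forall>n. 7 \<le> n \<longrightarrow> q_index n (G13 n) < q_index n (K11_plus n))"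
proof (intro conjI ballI allI impI)
  fix i n :: nat assume i: "i \<in> {1..11::nat}" and h: "7 \<le> n \<and> U_size i \<le> n \<and> (n - U_size i) mod 4 = 0"
  define k where "k = U_size i"
  define m where "m = (n - k) div 4"
  have n7: "7 \<le> n" using h by simp
  have nk: "n = k + 4 * m"
  proof -
    have "k \<le> n" "(n - k) mod 4 = 0" using h by (auto simp: k_def)
    thus ?thesis unfolding m_def by presburger
  qed
  have G: "G_graph i n = attach_K4 k m (from_edges (U_edges i))" unfolding G_graph_def k_def m_def ..
  have "i = 1 \<or> i = 2 \<or> i = 3 \<or> i = 4 \<or> i = 5 \<or> i = 6 \<or> i = 7 \<or> i = 8 \<or> i = 9 \<or> i = 10 \<or> i = 11"
    using i by (simp only: atLeastAtMost_iff) presburger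
  thus "q_index n (G_graph i n) < q_index n (K11_plus n)"
  proof (elim disjE)
    
      assume ii: "i = 1"
      have kk: "k = 6" unfolding k_def ii by (simp add: U_size_def)
      have "q_index n (attach_K4 k m (from_edges (U_edges i))) < q_index n (K11_plus n)" using compare[OF n7 G1_ex[OF nk[unfolded kk]] G1_up[OF nk[unfolded kk] n7]] kk ii by simp
      thus ?thesis unfolding G .
    next
      assume ii: "i = 2"
      have kk: "k = 6" unfolding k_def ii by (simp add: U_size_def)
      have "q_index n (attach_K4 k m (from_edges (U_edges i))) < q_index n (K11_plus n)" using compare[OF n7 G2_ex[OF nk[unfolded kk]] G2_up[OF nk[unfolded kk] n7]] kk ii by simp
      thus ?thesis unfolding G .
    next
      assume ii: "i = 3"
      have kk: "k = 7" unfolding k_def ii by (simp add: U_size_def)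
      have "q_index n (attach_K4 k m (from_edges (U_edges i))) < q_index n (K11_plus n)" using compare[OF n7 G3_ex[OF nk[unfolded kk]] G3_up[OF nk[unfolded kk] n7]] kk ii by simp
      thus ?thesis unfolding G .
    next
      assume ii: "i = 4"
      have kk: "k = 7" unfolding k_def ii by (simp add: U_size_def)
      have "q_index n (attach_K4 k m (from_edges (U_edges i))) < q_index n (K11_plus n)" using compare[OF n7 G4_ex[OF nk[unfolded kk]] G4_up[OF nk[unfolded kk] n7]] kk ii by simp
      thus ?thesis unfolding G .
    next
      assume ii: "i = 5"
      have kk: "k = 9" unfolding k_def ii by (simp add: U_size_def)
      have "q_index n (attach_K4 k m (from_edges (U_edges i))) < q_index n (K11_plus n)" using compare[OF n7 G5_ex[OF nk[unfolded kk]] G5_up[OF nk[unfolded kk] n7]] kk ii by simp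
      thus ?thesis unfolding G .
    next
      assume ii: "i = 6"
      have kk: "k = 9" unfolding k_def ii by (simp add: U_size_def)
      have "q_index n (attach_K4 k m (from_edges (U_edges i))) < q_index n (K11_plus n)" using compare[OF n7 G6_ex[OF nk[unfolded kk]] G6_up[OF nk[unfolded kk] n7]] kk ii by simp
      thus ?thesis unfolding G .
    next
      assume ii: "i = 7"
      have kk: "k = 8" unfolding k_def ii by (simp add: U_size_def)
      have "q_index n (attach_K4 k m (from_edges (U_edges i))) < q_index n (K11_plus n)" using compare[OF n7 G7_ex[OF nk[unfolded kk]] G7_up[OF nk[unfolded kk] n7]] kk ii by simp
      thus ?thesis unfolding G .
    next
      assume ii: "i = 8"
      have kk: "k = 6" unfolding k_def ii by (simp add: U_size_def)
      have "q_index n (attach_K4 k m (from_edges (U_edges i))) < q_index n (K11_plus n)" using compare[OF n7 G8_ex[OF nk[unfolded kk]] G8_up[OF nk[unfolded kk] n7]] kk ii by simp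
      thus ?thesis unfolding G .
    next
      assume ii: "i = 9"
      have kk: "k = 6" unfolding k_def ii by (simp add: U_size_def)
      have "q_index n (attach_K4 k m (from_edges (U_edges i))) < q_index n (K11_plus n)" using compare[OF n7 G9_ex[OF nk[unfolded kk]] G9_up[OF nk[unfolded kk] n7]] kk ii by simp
      thus ?thesis unfolding G .
    next
      assume ii: "i = 10"
      have kk: "k = 7" unfolding k_def ii by (simp add: U_size_def)
      have "q_index n (attach_K4 k m (from_edges (U_edges i))) < q_index n (K11_plus n)" using compare[OF n7 G10_ex[OF nk[unfolded kk]] G10_up[OF nk[unfolded kk] n7]] kk ii by simp
      thus ?thesis unfolding G .
    next
      assume ii: "i = 11"
      have kk: "k = 8" unfolding k_def ii by (simp add: U_size_def)
      have "q_index n (attach_K4 k m (from_edges (U_edges i))) < q_index n (K11_plus n)" using compare[OF n7 G11_ex[OF nk[unfolded kk]] G11_up[OF nk[unfolded kk] n7]] kk ii by simp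
      thus ?thesis unfolding G .
  qed
next
  fix n s :: nat assume h: "3 \<le> s \<and> s + 7 \<le> n \<and> (n - s - 3) mod 4 = 0"
  define m where "m = (n - s - 3) div 4"
  have s3: "3 \<le> s" and ns: "s + 7 \<le> n" using h by auto
  have n7: "7 \<le> n" using ns by simp
  have nk: "n = (s + 3) + 4 * m" unfolding m_def using h by presburger
  have G: "G12 n s = attach_K4 (s + 3) m (U12 s)" unfolding G12_def m_def by (simp add: diff_diff_add)
  show "q_index n (G12 n s) < q_index n (K11_plus n)"
    unfolding G by (rule compare[OF n7 G12_ex[OF s3 nk] G12_up[OF s3 nk ns]])
next
  fix n :: nat assume n7: "7 \<le> n"
  show "q_index n (G13 n) < q_index n (K11_plus n)"
    by (rule compare[OF n7 G13_ex[OF n7] G13_up[OF n7]])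
qed

end
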